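(* Let $X$ be a finite-dimensional real Banach space with $\dim X\ge 2$. Then for every $t\in[0,1]$, $S_P(X)\ge \frac{\gamma_X(t)+t^2-3}{2+2t^2}$.
   Context: For a real Banach space $X$ with unit sphere $S_X$, the P-angle constant is $S_P(X)=\sup\left\{\frac{\|x+y\|^2+\|x-y\|^2-4}{2\|x+y\|\,\|x-y\|}: x,y\in S_X,\ x\neq \pm y\right\}$. For $t\in[0,1]$, $\gamma_X(t)=\sup\left\{\frac{\|x+ty\|^2+\|x-ty\|^2}{2}: x,y\in S_X\right\}$. *)

theory Defs
  imports "HOL-Analysis.Analysis"
begin

definition P_angle_const :: "'a::real_normed_vector itself \<Rightarrow> real" where
  "P_angle_const _ = Sup {(norm (x + y)^2 + norm (x - y)^2 - 4) / (2 * norm (x + y) * norm (x - y)) |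
       x y :: 'a. norm x = 1 \<and> norm y = 1 \<and> x \<noteq> y \<and> x \<noteq> - y}"

definition gamma_const :: "'a::real_normed_vector itself \<Rightarrow> real \<Rightarrow> real" where
  "gamma_const _ t = Sup {(norm (x + t *\<^sub>R y)^2 + norm (x - t *\<^sub>R y)^2) / 2 |
       x y :: 'a. norm x = 1 \<and> norm y = 1}"

end

theory Submission
  imports Defs
begin

lemma P_upper:
  fixes x y :: "'a::real_normed_vector"
  assumes "norm x = 1" "norm y = 1"
  shows "(norm (x + y)^2 + norm (x - y)^2 - 4) / (2 * norm (x + y) * norm (x - y)) \<le> 1/2"
proof -
  define a where "a = norm (x+y)"
  define b where "b = norm (x-y)"
  have a2: "a \<le> 2" unfolding a_def using norm_triangle_ineq[of x y] assms by simp
  have b2: "b \<le> 2" unfolding b_def using norm_triangle_ineq4[of x y] assms by simp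
  have a0: "a \<ge> 0" "b \<ge> 0" unfolding a_def b_def by auto
  show ?thesis
  proof (cases "a = 0 \<or> b = 0")
    case True then show ?thesis unfolding a_def[symmetric] b_def[symmetric] by auto
  next
    case False
    then have pos: "a > 0" "b > 0" using a0 by auto
    have "a^2 + b^2 - 4 \<le> a * b"
    proof (cases "a \<le> b")
      case True
      have "b^2 \<le> 4" using power_mono[OF b2 a0(2), of 2] by simp
      moreover have "a*a \<le> a*b" using True pos by (simp add: mult_left_mono)
      ultimately show ?thesis by (simp add: power2_eq_square)
    next
      case False
      have "a^2 \<le> 4" using power_mono[OF a2 a0(1), of 2] by simp
      moreover have "b*b \<le> a*b" using False pos by (simp add: mult_right_mono)
      ultimately show ?thesis by (simp add: power2_eq_square)
    qed
    then show ?thesis unfolding a_def[symmetric] b_def[symmetric] using pos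
      by (simp add: divide_simps)
  qed
qed

lemma poly_ineq:
  fixes s t :: real
  assumes "2 \<le> s" "s \<le> 4" "0 \<le> t" "t \<le> 1"
  shows "((1-t) + t * s + t^2 - 3) / (2 + 2*t^2) \<le> (s-2)/s"
proof -
  have Q: "t*(s-2)*(s-4) + (1-t)*(s * (t-4)+4-4*t) \<le> 0"
  proof -
    have "t*(s-2)*(s-4) \<le> 0" using assms by (simp add: mult_nonneg_nonpos)
    moreover have "(1-t)*(s * (t-4)+4-4*t) \<le> 0"
    proof -
      have "s * (t-4) \<le> 2*(t-4)" using assms by (intro mult_right_mono_neg) auto
      then have "s * (t-4)+4-4*t \<le> 0" using assms by (smt (verit))
      then show ?thesis using assms by (simp add: mult_nonneg_nonpos)
    qed
    ultimately show ?thesis by linarith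
  qed
  have "((1-t) + t * s + t^2 - 3) * s \<le> (s-2) * (2 + 2*t^2)"
    using Q by (simp add: algebra_simps power2_eq_square)
  moreover have "2 + 2*t^2 > 0" by (simp add: add_pos_nonneg)
  ultimately show ?thesis using assms by (simp add: divide_simps)
qed

lemma sq_convex:
  fixes a t :: real
  assumes "0 \<le> t" "t \<le> 1"
  shows "((1-t) + t*a)^2 \<le> (1-t) + t*a^2"
proof -
  have "(1-t) + t*a^2 - ((1-t) + t*a)^2 = t*(1-t)*(a-1)^2"
    by (simp add: algebra_simps power2_eq_square)
  moreover have "t*(1-t)*(a-1)^2 \<ge> 0" using assms by simp
  ultimately show ?thesis by linarith
qed

lemma gamma_elem_bound:
  fixes x y :: "'a::real_normed_vector"
  assumes "norm x = 1" "norm y = 1" "0 \<le> t" "t \<le> 1"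
  shows "(norm (x + t *\<^sub>R y)^2 + norm (x - t *\<^sub>R y)^2) / 2
     \<le> (1-t) + t * ((norm (x+y)^2 + norm (x-y)^2)/2)"
proof -
  have e1: "x + t *\<^sub>R y = (1-t) *\<^sub>R x + t *\<^sub>R (x+y)" by (simp add: algebra_simps)
  have e2: "x - t *\<^sub>R y = (1-t) *\<^sub>R x + t *\<^sub>R (x-y)" by (simp add: algebra_simps)
  have n1: "norm (x + t *\<^sub>R y) \<le> (1-t) + t * norm (x+y)"
    unfolding e1 using norm_triangle_ineq[of "(1-t) *\<^sub>R x" "t *\<^sub>R (x+y)"] assms by simp
  have n2: "norm (x - t *\<^sub>R y) \<le> (1-t) + t * norm (x-y)"
    unfolding e2 using norm_triangle_ineq[of "(1-t) *\<^sub>R x" "t *\<^sub>R (x-y)"] assms by simp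
  have "norm (x + t *\<^sub>R y)^2 \<le> ((1-t) + t * norm (x+y))^2"
    using power_mono[OF n1 norm_ge_zero] by simp
  also have "\<dots> \<le> (1-t) + t * norm (x+y)^2" by (rule sq_convex[OF assms(3,4)])
  finally have m1: "norm (x + t *\<^sub>R y)^2 \<le> (1-t) + t * norm (x+y)^2" .
  have "norm (x - t *\<^sub>R y)^2 \<le> ((1-t) + t * norm (x-y))^2"
    using power_mono[OF n2 norm_ge_zero] by simp
  also have "\<dots> \<le> (1-t) + t * norm (x-y)^2" by (rule sq_convex[OF assms(3,4)])
  finally have m2: "norm (x - t *\<^sub>R y)^2 \<le> (1-t) + t * norm (x-y)^2" .
  show ?thesis using m1 m2 by (simp add: field_simps)
qed

lemma gamma_elem_upper:
  fixes x y :: "'a::real_normed_vector"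
  assumes "norm x = 1" "norm y = 1" "0 \<le> t" "t \<le> 1"
  shows "(norm (x + t *\<^sub>R y)^2 + norm (x - t *\<^sub>R y)^2) / 2 \<le> 4"
proof -
  have "norm (x+y) \<le> 2" using norm_triangle_ineq[of x y] assms by simp
  hence "norm (x+y)^2 \<le> 4" using power_mono[of "norm (x+y)" 2 2] by simp
  moreover have "norm (x-y) \<le> 2" using norm_triangle_ineq4[of x y] assms by simp
  hence "norm (x-y)^2 \<le> 4" using power_mono[of "norm (x-y)" 2 2] by simp
  ultimately have "(1-t) + t * ((norm (x+y)^2 + norm (x-y)^2)/2) \<le> (1-t) + t*4"
    using assms by (intro add_left_mono mult_left_mono) auto
  then show ?thesis using gamma_elem_bound[OF assms] assms by linarith
qed

lemma exists_indep:
  assumes "dim (UNIV :: 'a::real_normed_vector set) \<ge> 2"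
  shows "\<exists>z::'a. z \<notin> span {x}"
proof (rule ccontr)
  assume "\<not> ?thesis"
  then have "UNIV \<subseteq> span {x}" by auto
  then have "dim (UNIV :: 'a set) \<le> card {x}" by (rule dim_le_card) simp
  then show False using assms by simp
qed

lemma james_pair:
  fixes x z :: "'a::real_normed_vector"
  assumes x: "norm x = 1" and z: "z \<notin> span {x}"
  shows "\<exists>y. norm y = 1 \<and> norm (x + y) = norm (x - y)"
proof -
  define w where "w s = s *\<^sub>R x + (1 - s^2) *\<^sub>R z" for s :: real
  have wnz: "w s \<noteq> 0" if "-1 \<le> s" "s \<le> 1" for s
  proof
    assume w0: "w s = 0"
    show False
    proof (cases "1 - s^2 = 0")
      case True
      then have "s = 1 \<or> s = -1" by (metis eq_iff_diff_eq_0 power2_eq_1_iff)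
      then show False using w0 x by (auto simp: w_def)
    next
      case False
      have "(1 - s^2) *\<^sub>R z = - (s *\<^sub>R x)" using w0 unfolding w_def by (simp add: add_eq_0_iff2)
      then have "z = (- s / (1 - s^2)) *\<^sub>R x" using False
        by (metis (no_types, lifting) divide_inverse_commute inverse_eq_divide real_vector.scale_minus_left
            real_vector.scale_scale real_vector.scale_minus_right scaleR_right_imp_eq  mult.commute right_inverse scaleR_one)
      then have "z \<in> span {x}" by (simp add: span_base span_scale span_neg del: scaleR_minus_left)
      then show False using z by simp
    qed
  qed
  define y where "y s = (1 / norm (w s)) *\<^sub>R w s" for s
  define \<phi> where "\<phi> s = norm (x + y s) - norm (x - y s)" for s
  have cont: "continuous_on {-1..1} \<phi>"
    unfolding \<phi>_def y_def w_def
    using wnz[unfolded w_def]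
    by (intro continuous_intros) auto
  have ym1: "y (-1) = - x" using x by (simp add: y_def w_def)
  have y1: "y 1 = x" using x by (simp add: y_def w_def)
  have "\<phi> (-1) \<le> 0" using ym1 x by (simp add: \<phi>_def)
  moreover have "0 \<le> \<phi> 1" using y1 x by (simp add: \<phi>_def)
  ultimately obtain s where s: "-1 \<le> s" "s \<le> 1" "\<phi> s = 0"
    using IVT'[of \<phi> "-1" 0 1] cont by auto
  have "norm (y s) = 1" using wnz[OF s(1,2)] by (simp add: y_def)
  then show ?thesis using s(3) by (auto simp: \<phi>_def)
qed

lemma P_bdd:
  "bdd_above {(norm (x + y)^2 + norm (x - y)^2 - 4) / (2 * norm (x + y) * norm (x - y)) |
       x y :: 'a::real_normed_vector. norm x = 1 \<and> norm y = 1 \<and> x \<noteq> y \<and> x \<noteq> - y}"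
  by (rule bdd_aboveI[where M="1/2"]) (blast intro: P_upper)

lemma P_elem_le:
  fixes x y :: "'a::real_normed_vector"
  assumes "norm x = 1" "norm y = 1" "x \<noteq> y" "x \<noteq> - y"
  shows "(norm (x + y)^2 + norm (x - y)^2 - 4) / (2 * norm (x + y) * norm (x - y)) \<le> P_angle_const TYPE('a)"
  unfolding P_angle_const_def
  by (rule cSup_upper[OF _ P_bdd]) (use assms in blast)

lemma P_nonneg:
  assumes "dim (UNIV :: 'a::real_normed_vector set) \<ge> 2"
  shows "0 \<le> P_angle_const TYPE('a)"
proof -
  have "\<exists>x0::'a. x0 \<notin> span {}"
  proof (rule ccontr)
    assume "\<not> ?thesis"
    then have "UNIV \<subseteq> span ({}::'a set)" by auto
    then have "dim (UNIV :: 'a set) \<le> card ({}::'a set)" by (rule dim_le_card) simp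
    then show False using assms by simp
  qed
  then obtain x0 :: 'a where x0: "x0 \<notin> span {}" by blast
  then have "x0 \<noteq> 0" by auto
  define x where "x = (1 / norm x0) *\<^sub>R x0"
  have nx: "norm x = 1" using \<open>x0 \<noteq> 0\<close> by (simp add: x_def)
  obtain z where z: "z \<notin> span {x}" using exists_indep[OF assms] by blast
  obtain y where ny: "norm y = 1" and eq: "norm (x + y) = norm (x - y)"
    using james_pair[OF nx z] by blast
  define a where "a = norm (x + y)"
  have xy: "x \<noteq> y"
  proof
    assume "x = y"
    then have "norm (x + y) = 2" using nx by (simp flip: scaleR_2)
    moreover have "norm (x - y) = 0" using \<open>x = y\<close> by simp
    ultimately show False using eq by simp
  qed
  have xmy: "x \<noteq> - y"
  proof
    assume "x = - y"
    then have "x - y = - (2 *\<^sub>R y)" by (simp add: scaleR_2)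
    then have "norm (x - y) = 2" using ny by simp
    moreover have "norm (x + y) = 0" using \<open>x = - y\<close> by simp
    ultimately show False using eq by simp
  qed
  have apos: "a > 0" unfolding a_def using xmy by (auto simp: add_eq_0_iff2)
  have bx: "norm (x - y) = a" using eq a_def by simp
  have f1: "(norm (x + y)^2 + norm (x - y)^2 - 4) / (2 * norm (x + y) * norm (x - y)) = (2*a^2 - 4) / (2 * a^2)"
    unfolding bx a_def[symmetric] by (simp add: power2_eq_square)
  define u where "u = (1/a) *\<^sub>R (x + y)"
  define v where "v = (1/a) *\<^sub>R (x - y)"
  have nu: "norm u = 1" using apos by (simp add: u_def a_def[symmetric])
  have nv: "norm v = 1" using apos bx by (simp add: v_def)
  have upv: "u + v = (2/a) *\<^sub>R x" unfolding u_def v_def by (simp add: algebra_simps flip: scaleR_2)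
  have umv: "u - v = (2/a) *\<^sub>R y" unfolding u_def v_def by (simp add: algebra_simps flip: scaleR_2)
  have nupv: "norm (u + v) = 2/a" using apos nx by (simp add: upv)
  have numv: "norm (u - v) = 2/a" using apos ny by (simp add: umv)
  have uv: "u \<noteq> v" using umv ny apos by (metis nonzero_mult_div_cancel_right norm_zero numv right_minus_eq zero_neq_numeral divide_eq_0_iff less_irrefl)
  have umv': "u \<noteq> - v" using upv nx apos by (metis add_eq_0_iff2 divide_eq_0_iff norm_zero nupv zero_neq_numeral less_irrefl)
  have f2: "(norm (u + v)^2 + norm (u - v)^2 - 4) / (2 * norm (u + v) * norm (u - v)) = (8/a^2 - 4) / (8/a^2)"
    unfolding nupv numv using apos by (simp add: power2_eq_square field_simps)
  show ?thesis
  proof (cases "a^2 \<ge> 2")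
    case True
    have "0 \<le> (2*a^2 - 4) / (2 * a^2)" using True by simp
    also have "\<dots> \<le> P_angle_const TYPE('a)" using P_elem_le[OF nx ny xy xmy] f1 by simp
    finally show ?thesis .
  next
    case False
    have "8/a^2 \<ge> 4" using False apos by (simp add: field_simps)
    then have "0 \<le> (8/a^2 - 4) / (8/a^2)" by simp
    also have "\<dots> \<le> P_angle_const TYPE('a)" using P_elem_le[OF nu nv uv umv'] f2 by simp
    finally show ?thesis .
  qed
qed

theorem corollary4p6:
  assumes fin: "\<exists>B::'a::banach set. finite B \<and> span B = UNIV"
    and dim2: "dim (UNIV :: 'a set) \<ge> 2"
    and t: "0 \<le> t" "t \<le> (1::real)"
  shows "P_angle_const TYPE('a) \<ge> (gamma_const TYPE('a) t + t^2 - 3) / (2 + 2 * t^2)"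
proof -
  define SP where "SP = P_angle_const TYPE('a)"
  have SP0: "0 \<le> SP" unfolding SP_def by (rule P_nonneg[OF dim2])
  have D: "2 + 2 * t^2 > 0" by (simp add: add_pos_nonneg)
  define G where "G = {(norm (x + t *\<^sub>R y)^2 + norm (x - t *\<^sub>R y)^2) / 2 | x y :: 'a. norm x = 1 \<and> norm y = 1}"
  have elem: "A \<le> SP * (2 + 2 * t^2) + 3 - t^2" if "A \<in> G" for A
  proof -
    obtain x y :: 'a where nx: "norm x = 1" and ny: "norm y = 1"
      and A: "A = (norm (x + t *\<^sub>R y)^2 + norm (x - t *\<^sub>R y)^2) / 2"
      using \<open>A \<in> G\<close> unfolding G_def by blast
    define s where "s = (norm (x+y)^2 + norm (x-y)^2)/2"
    have As: "A \<le> (1-t) + t * s" unfolding A s_def by (rule gamma_elem_bound[OF nx ny t])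
    show ?thesis
    proof (cases "s \<le> 2")
      case True
      have "t * s \<le> t * 2" using True t by (simp add: mult_left_mono)
      moreover have "t^2 \<le> t" using t by (simp add: power2_eq_square mult_left_le)
      moreover have "0 \<le> SP * (2 + 2 * t^2)" using SP0 D by simp
      ultimately show ?thesis using As t by linarith
    next
      case False
      have a2: "norm (x+y) \<le> 2" using norm_triangle_ineq[of x y] nx ny by simp
      have b2: "norm (x-y) \<le> 2" using norm_triangle_ineq4[of x y] nx ny by simp
      have "norm (x+y)^2 \<le> 4" using power_mono[OF a2 norm_ge_zero, of 2] by simp
      moreover have "norm (x-y)^2 \<le> 4" using power_mono[OF b2 norm_ge_zero, of 2] by simp
      ultimately have s4: "s \<le> 4" unfolding s_def by simp
      have xy: "x \<noteq> y"
      proof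
        assume "x = y"
        then have "x + y = 2 *\<^sub>R x" by (simp add: scaleR_2)
        then have "s = 2" using \<open>x = y\<close> nx by (simp add: s_def)
        then show False using False by simp
      qed
      have xmy: "x \<noteq> - y"
      proof
        assume "x = - y"
        then have "x - y = - (2 *\<^sub>R y)" by (simp add: scaleR_2)
        then have "s = 2" using \<open>x = - y\<close> ny by (simp add: s_def)
        then show False using False by simp
      qed
      define a where "a = norm (x+y)"
      define b where "b = norm (x-y)"
      have apos: "a > 0" unfolding a_def using xmy by (auto simp: add_eq_0_iff2)
      have bpos: "b > 0" unfolding b_def using xy by auto
      have ab: "a * b \<le> s" unfolding s_def a_def[symmetric] b_def[symmetric]
        using sum_squares_bound[of a b] by (simp add: power2_eq_square field_simps)
      have "(s-2)/s \<le> (2 * s - 4) / (2 * a * b)"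
      proof -
        have "(s-2)/s = (2 * s-4)/(2 * s)" using False by (simp add: field_simps)
        also have "\<dots> \<le> (2 * s - 4) / (2 * a * b)"
          using False ab apos bpos by (intro divide_left_mono) (auto simp: mult_pos_pos)
        finally show ?thesis .
      qed
      also have "(2 * s - 4) / (2 * a * b) = (norm (x + y)^2 + norm (x - y)^2 - 4) / (2 * norm (x + y) * norm (x - y))"
        unfolding s_def a_def b_def by simp
      also have "\<dots> \<le> SP" unfolding SP_def by (rule P_elem_le[OF nx ny xy xmy])
      finally have fs: "(s-2)/s \<le> SP" .
      have "((1-t) + t * s + t^2 - 3) / (2 + 2*t^2) \<le> SP"
        using poly_ineq[of s t] False s4 t fs by linarith
      then have "(1-t) + t * s + t^2 - 3 \<le> SP * (2 + 2*t^2)" using D by (simp add: divide_simps)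
      then show ?thesis using As by linarith
    qed
  qed
  obtain e :: 'a where "e \<notin> span {}"
  proof -
    have "\<exists>x0::'a. x0 \<notin> span {}"
    proof (rule ccontr)
      assume "\<not> ?thesis"
      then have "UNIV \<subseteq> span ({}::'a set)" by auto
      then have "dim (UNIV :: 'a set) \<le> card ({}::'a set)" by (rule dim_le_card) simp
      then show False using dim2 by simp
    qed
    then show ?thesis using that by blast
  qed
  then have "e \<noteq> 0" by auto
  define x where "x = (1 / norm e) *\<^sub>R e"
  have nx: "norm x = 1" using \<open>e \<noteq> 0\<close> by (simp add: x_def)
  have "G \<noteq> {}" unfolding G_def using nx by blast
  then have "Sup G \<le> SP * (2 + 2 * t^2) + 3 - t^2" by (rule cSup_least) (rule elem)
  then have "gamma_const TYPE('a) t + t^2 - 3 \<le> SP * (2 + 2 * t^2)"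
    unfolding gamma_const_def G_def by simp
  then show ?thesis unfolding SP_def[symmetric] using D by (simp add: divide_simps)
qed

end
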